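(* Let $F$ be a field of characteristic not $2$ and let $L/F$ be any quadratic extension of $F$. Then $L^{(3)}/F$ is a Galois extension.
   Context: All fields are taken inside a fixed quadratic closure $F_q$ of $F$ (the smallest quadratically closed extension of $F$ in an algebraic closure). For a field $K$ of characteristic not $2$, define $K^{(1)}=K$ and, for $n\ge 1$, $K^{(n+1)}$ is the compositum of all quadratic extensions of $K^{(n)}$ which are Galois over $K$. *)

theory Defs
  imports "HOL-Algebra.Algebra"
begin

text \<open>All fields live inside a fixed ambient field R (playing the role of the
quadratic closure F_q of F); subfields are subsets of carrier R.\<close>

definition sq_closed_set :: "('a, 'b) ring_scheme \<Rightarrow> 'a set \<Rightarrow> bool" where
  "sq_closed_set R K \<longleftrightarrow> (\<forall>x\<in>K. \<exists>y\<in>K. y \<otimes>\<^bsub>R\<^esub> y = x)"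

definition quadratic_closure :: "('a, 'b) ring_scheme \<Rightarrow> 'a set \<Rightarrow> bool" where
  "quadratic_closure R F \<longleftrightarrow> field R \<and> subfield F R \<and> sq_closed_set R (carrier R) \<and>
     (\<forall>K. subfield K R \<and> F \<subseteq> K \<and> sq_closed_set R K \<longrightarrow> K = carrier R)"

definition quadratic_ext :: "('a, 'b) ring_scheme \<Rightarrow> 'a set \<Rightarrow> 'a set \<Rightarrow> bool" where
  "quadratic_ext R K M \<longleftrightarrow> subfield K R \<and> subfield M R \<and> K \<subseteq> M \<and> ring.dimension R 2 K M"

definition galois_ext :: "('a, 'b) ring_scheme \<Rightarrow> 'a set \<Rightarrow> 'a set \<Rightarrow> bool" where
  "galois_ext R K M \<longleftrightarrow> subfield K R \<and> subfield M R \<and> K \<subseteq> M \<and>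
     (\<forall>x\<in>M. ring.algebraic R K x \<and>
        (\<exists>rs. distinct rs \<and> set rs \<subseteq> M \<and> length rs = degree (ring.Irr R K x) \<and>
              (\<forall>r\<in>set rs. ring.eval R (ring.Irr R K x) r = \<zero>\<^bsub>R\<^esub>)))"

text \<open>tower_aux R K n = K^(n+1).\<close>
primrec tower_aux :: "('a, 'b) ring_scheme \<Rightarrow> 'a set \<Rightarrow> nat \<Rightarrow> 'a set" where
  "tower_aux R K 0 = K"
| "tower_aux R K (Suc n) =
     generate_field R (tower_aux R K n \<union>
        \<Union>{M. quadratic_ext R (tower_aux R K n) M \<and> galois_ext R K M})"

text \<open>K^(n) for n \<ge> 1 (K^(1) = K).\<close>
definition tower :: "('a, 'b) ring_scheme \<Rightarrow> 'a set \<Rightarrow> nat \<Rightarrow> 'a set" where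
  "tower R K n = tower_aux R K (n - 1)"

end

theory Submission
  imports Defs
begin

definition autF :: "('a, 'b) ring_scheme \<Rightarrow> 'a set \<Rightarrow> ('a \<Rightarrow> 'a) \<Rightarrow> bool" where
  "autF R F s \<longleftrightarrow> s \<in> ring_hom R R \<and> bij_betw s (carrier R) (carrier R) \<and> (\<forall>a\<in>F. s a = a)"

locale qcl = field R for R (structure) + fixes F :: "'a set"
  assumes qc: "quadratic_closure R F" and two: "\<one> \<oplus> \<one> \<noteq> \<zero>"
begin

lemma F_sub: "subfield F R" using qc unfolding quadratic_closure_def by auto

lemma F_carr: "F \<subseteq> carrier R" using subfieldE(3)[OF F_sub] .

lemma sqR: "x \<in> carrier R \<Longrightarrow> \<exists>y\<in>carrier R. y \<otimes> y = x"
  using qc unfolding quadratic_closure_def sq_closed_set_def by auto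

lemma minimal: "subfield K R \<Longrightarrow> F \<subseteq> K \<Longrightarrow> K \<noteq> carrier R \<Longrightarrow> \<exists>a\<in>K. \<forall>y\<in>K. y \<otimes> y \<noteq> a"
  using qc unfolding quadratic_closure_def sq_closed_set_def by blast

definition emb :: "('a \<times> 'a) set \<Rightarrow> bool" where
  "emb G \<longleftrightarrow> G \<subseteq> carrier R \<times> carrier R \<and> (\<forall>a\<in>F. (a,a) \<in> G)
     \<and> (\<forall>x y z. (x,y) \<in> G \<longrightarrow> (x,z) \<in> G \<longrightarrow> y = z)
     \<and> (\<forall>x y x' y'. (x,y) \<in> G \<longrightarrow> (x',y') \<in> G \<longrightarrow> (x \<oplus> x', y \<oplus> y') \<in> G \<and> (x \<otimes> x', y \<otimes> y') \<in> G)
     \<and> (\<forall>x y. (x,y) \<in> G \<longrightarrow> (\<ominus> x, \<ominus> y) \<in> G)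
     \<and> (\<forall>x y. (x,y) \<in> G \<longrightarrow> x \<noteq> \<zero> \<longrightarrow> (inv x, inv y) \<in> G)"

lemma embD:
  assumes "emb G"
  shows "G \<subseteq> carrier R \<times> carrier R" "\<And>a. a \<in> F \<Longrightarrow> (a,a) \<in> G"
    "\<And>x y z. (x,y) \<in> G \<Longrightarrow> (x,z) \<in> G \<Longrightarrow> y = z"
    "\<And>x y x' y'. (x,y) \<in> G \<Longrightarrow> (x',y') \<in> G \<Longrightarrow> (x \<oplus> x', y \<oplus> y') \<in> G"
    "\<And>x y x' y'. (x,y) \<in> G \<Longrightarrow> (x',y') \<in> G \<Longrightarrow> (x \<otimes> x', y \<otimes> y') \<in> G"
    "\<And>x y. (x,y) \<in> G \<Longrightarrow> (\<ominus> x, \<ominus> y) \<in> G"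
    "\<And>x y. (x,y) \<in> G \<Longrightarrow> x \<noteq> \<zero> \<Longrightarrow> (inv x, inv y) \<in> G"
  using assms unfolding emb_def by blast+

lemma emb_carr: "emb G \<Longrightarrow> (x,y) \<in> G \<Longrightarrow> x \<in> carrier R \<and> y \<in> carrier R"
  using embD(1) by blast

lemma emb_one: "emb G \<Longrightarrow> (\<one>, \<one>) \<in> G"
  using embD(2) subringE(3)[OF subfieldE(1)[OF F_sub]] by blast

lemma emb_zero: "emb G \<Longrightarrow> (\<zero>, \<zero>) \<in> G"
  using embD(2) subringE(2)[OF subfieldE(1)[OF F_sub]] by blast

lemma emb_nz: assumes "emb G" "(x,y) \<in> G" "x \<noteq> \<zero>" shows "y \<noteq> \<zero>"
proof
  assume y: "y = \<zero>"
  have "(inv x, inv y) \<in> G" using embD(7)[OF assms] .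
  hence "(x \<otimes> inv x, y \<otimes> inv y) \<in> G" using embD(5)[OF assms(1,2)] by blast
  moreover have "x \<otimes> inv x = \<one>" using assms emb_carr[OF assms(1,2)] field_Units by auto
  moreover have "inv y \<in> carrier R" using emb_carr[OF assms(1) \<open>(inv x, inv y) \<in> G\<close>] by auto
  ultimately have "(\<one>, \<zero>) \<in> G" using y by auto
  hence "\<zero> = \<one>" using embD(3)[OF assms(1) _ emb_one[OF assms(1)]] by blast
  thus False using one_not_zero by simp
qed

lemma emb_dom_subfield: assumes "emb G" shows "subfield (fst ` G) R"
proof (rule subfieldI'[OF subringI])
  show "fst ` G \<subseteq> carrier R" using embD(1)[OF assms] by auto
  show "\<one> \<in> fst ` G" using emb_one[OF assms] by force
  show "\<ominus> h \<in> fst ` G" if "h \<in> fst ` G" for h using that embD(6)[OF assms] by force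
  show "h1 \<otimes> h2 \<in> fst ` G" if "h1 \<in> fst ` G" "h2 \<in> fst ` G" for h1 h2
    using that embD(5)[OF assms] by force
  show "h1 \<oplus> h2 \<in> fst ` G" if "h1 \<in> fst ` G" "h2 \<in> fst ` G" for h1 h2
    using that embD(4)[OF assms] by force
  show "inv k \<in> fst ` G" if "k \<in> fst ` G - {\<zero>}" for k
    using that embD(7)[OF assms] by force
qed

lemma emb_F_dom: "emb G \<Longrightarrow> F \<subseteq> fst ` G"
  using embD(2) by force

lemma emb_chain:
  assumes "C \<noteq> {}" "\<And>G. G \<in> C \<Longrightarrow> emb G" "\<And>A B. A \<in> C \<Longrightarrow> B \<in> C \<Longrightarrow> A \<subseteq> B \<or> B \<subseteq> A"
  shows "emb (\<Union>C)"
proof -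
  have both: "\<exists>G\<in>C. p \<in> G \<and> q \<in> G" if pq: "p \<in> \<Union>C" "q \<in> \<Union>C" for p q
  proof -
    obtain A where A: "A \<in> C" "p \<in> A" using pq(1) by blast
    obtain B where B: "B \<in> C" "q \<in> B" using pq(2) by blast
    show ?thesis using assms(3)[OF A(1) B(1)] A B by blast
  qed
  obtain G0 where "G0 \<in> C" using assms(1) by auto
  show ?thesis unfolding emb_def
  proof (intro conjI allI impI ballI)
    show "\<Union>C \<subseteq> carrier R \<times> carrier R"
    proof
      fix p assume "p \<in> \<Union>C"
      then obtain G where "G \<in> C" "p \<in> G" by blast
      thus "p \<in> carrier R \<times> carrier R" using embD(1)[OF assms(2)] by blast
    qed
    show "(a, a) \<in> \<Union>C" if "a \<in> F" for a using embD(2)[OF assms(2)[OF \<open>G0 \<in> C\<close>] that] \<open>G0 \<in> C\<close> by blast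
    show "y = z" if h: "(x, y) \<in> \<Union>C" "(x, z) \<in> \<Union>C" for x y z
    proof -
      obtain G where "G \<in> C" "(x,y) \<in> G" "(x,z) \<in> G" using both[OF h] by blast
      thus ?thesis using embD(3)[OF assms(2)] by metis
    qed
    show "(x \<oplus> x', y \<oplus> y') \<in> \<Union>C" if h: "(x, y) \<in> \<Union>C" "(x', y') \<in> \<Union>C" for x y x' y'
    proof -
      obtain G where "G \<in> C" "(x,y) \<in> G" "(x',y') \<in> G" using both[OF h] by blast
      thus ?thesis using embD(4)[OF assms(2)] by blast
    qed
    show "(x \<otimes> x', y \<otimes> y') \<in> \<Union>C" if h: "(x, y) \<in> \<Union>C" "(x', y') \<in> \<Union>C" for x y x' y'
    proof -
      obtain G where "G \<in> C" "(x,y) \<in> G" "(x',y') \<in> G" using both[OF h] by blast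
      thus ?thesis using embD(5)[OF assms(2)] by blast
    qed
    show "(\<ominus> x, \<ominus> y) \<in> \<Union>C" if h: "(x, y) \<in> \<Union>C" for x y
    proof -
      obtain G where "G \<in> C" "(x,y) \<in> G" using h(1) by blast
      thus ?thesis using embD(6)[OF assms(2)] by blast
    qed
    show "(inv x, inv y) \<in> \<Union>C" if h: "(x, y) \<in> \<Union>C" "x \<noteq> \<zero>" for x y
    proof -
      obtain G where "G \<in> C" "(x,y) \<in> G" using h(1) by blast
      thus ?thesis using embD(7)[OF assms(2)] h(2) by blast
    qed
  qed
qed

end

context qcl begin

definition ext :: "('a \<times> 'a) set \<Rightarrow> 'a \<Rightarrow> 'a \<Rightarrow> ('a \<times> 'a) set" where
  "ext G b b' = {(u \<oplus> v \<otimes> b, u' \<oplus> v' \<otimes> b') | u u' v v'. (u,u') \<in> G \<and> (v,v') \<in> G}"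

lemma inv_eq: "x \<in> carrier R \<Longrightarrow> y \<in> carrier R \<Longrightarrow> x \<otimes> y = \<one> \<Longrightarrow> inv x = y"
  by (rule comm_inv_char)

lemma mul_inv: "x \<in> carrier R \<Longrightarrow> x \<noteq> \<zero> \<Longrightarrow> x \<otimes> inv x = \<one>"
  using field_Units by auto

lemma inv_carr: "x \<in> carrier R \<Longrightarrow> x \<noteq> \<zero> \<Longrightarrow> inv x \<in> carrier R"
  using field_Units by auto

lemma sub_minus: assumes "subfield K R" "x \<in> K" "y \<in> K" shows "x \<ominus> y \<in> K"
proof -
  have "\<ominus> y \<in> K" using subringE(5)[OF subfieldE(1)[OF assms(1)] assms(3)] .
  thus ?thesis unfolding a_minus_def using subringE(7)[OF subfieldE(1)[OF assms(1)] assms(2)] by simp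
qed

lemma rep_unique:
  assumes G: "emb G" and b: "b \<in> carrier R" "b \<notin> fst ` G"
    and m: "u1 \<in> fst ` G" "v1 \<in> fst ` G" "u2 \<in> fst ` G" "v2 \<in> fst ` G"
    and eq: "u1 \<oplus> v1 \<otimes> b = u2 \<oplus> v2 \<otimes> b"
  shows "u1 = u2 \<and> v1 = v2"
proof -
  let ?K = "fst ` G"
  have K: "subfield ?K R" using emb_dom_subfield[OF G] .
  have Kc: "?K \<subseteq> carrier R" using subfieldE(3)[OF K] .
  have c: "u1 \<in> carrier R" "v1 \<in> carrier R" "u2 \<in> carrier R" "v2 \<in> carrier R" using m Kc by (auto simp del: )
  have v: "v1 = v2"
  proof (rule ccontr)
    assume ne: "v1 \<noteq> v2"
    let ?d = "v1 \<ominus> v2"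
    have dc: "?d \<in> carrier R" using c by auto
    have dnz: "?d \<noteq> \<zero>"
    proof
      assume "?d = \<zero>"
      have "v1 = ?d \<oplus> v2" using c by algebra
      thus False using \<open>?d = \<zero>\<close> ne c by simp
    qed
    have dK: "?d \<in> ?K" using m sub_minus[OF K] by auto
    have "?d \<otimes> b = (u1 \<oplus> v1 \<otimes> b) \<ominus> u1 \<ominus> v2 \<otimes> b" using c b by algebra
    also have "\<dots> = u2 \<ominus> u1" unfolding eq using c b by algebra
    finally have db: "?d \<otimes> b = u2 \<ominus> u1" .
    have ic: "inv ?d \<in> carrier R" using inv_carr[OF dc dnz] .
    have "inv ?d \<otimes> (?d \<otimes> b) = (?d \<otimes> inv ?d) \<otimes> b" using ic dc b by algebra
    hence "b = inv ?d \<otimes> (?d \<otimes> b)" using mul_inv[OF dc dnz] b by simp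
    also have "\<dots> = inv ?d \<otimes> (u2 \<ominus> u1)" using db by simp
    finally have "b = inv ?d \<otimes> (u2 \<ominus> u1)" .
    moreover have "inv ?d \<in> ?K" using subfield_m_inv(1)[OF K] dK dnz by auto
    moreover have "u2 \<ominus> u1 \<in> ?K" using m sub_minus[OF K] by auto
    ultimately have "b \<in> ?K" using subringE(6)[OF subfieldE(1)[OF K]] by auto
    thus False using b by auto
  qed
  have "u1 = (u1 \<oplus> v1 \<otimes> b) \<ominus> v1 \<otimes> b" using c b by algebra
  also have "\<dots> = (u2 \<oplus> v2 \<otimes> b) \<ominus> v2 \<otimes> b" using eq v by simp
  also have "\<dots> = u2" using c b by algebra
  finally show ?thesis using v by simp
qed


lemma emb_minus: "emb G \<Longrightarrow> (x,y) \<in> G \<Longrightarrow> (x',y') \<in> G \<Longrightarrow> (x \<ominus> x', y \<ominus> y') \<in> G"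
  unfolding a_minus_def using embD(4,6) by blast

lemma ext_emb:
  assumes G: "emb G" and a: "(a, a') \<in> G" and b: "b \<in> carrier R" "b \<otimes> b = a" "b \<notin> fst ` G"
      and b': "b' \<in> carrier R" "b' \<otimes> b' = a'"
  shows "emb (ext G b b')" "G \<subseteq> ext G b b'" "(b, b') \<in> ext G b b'"
proof -
  let ?K = "fst ` G"
  have K: "subfield ?K R" using emb_dom_subfield[OF G] .
  have ac: "a \<in> carrier R" "a' \<in> carrier R" using emb_carr[OF G a] by auto
  have memI: "(u \<oplus> v \<otimes> b, u' \<oplus> v' \<otimes> b') \<in> ext G b b'" if "(u,u') \<in> G" "(v,v') \<in> G" for u u' v v'
    using that unfolding ext_def by blast
  have memE: "\<exists>u u' v v'. p = (u \<oplus> v \<otimes> b, u' \<oplus> v' \<otimes> b') \<and> (u,u') \<in> G \<and> (v,v') \<in> G"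
    if "p \<in> ext G b b'" for p
    using that unfolding ext_def by blast
  have cr: "u \<in> carrier R" "u' \<in> carrier R" if "(u,u') \<in> G" for u u'
    using emb_carr[OF G that] by auto
  show sub: "G \<subseteq> ext G b b'"
  proof
    fix p assume "p \<in> G"
    then obtain x y where p: "p = (x,y)" "(x,y) \<in> G" by (cases p) auto
    have "(x \<oplus> \<zero> \<otimes> b, y \<oplus> \<zero> \<otimes> b') \<in> ext G b b'" using memI[OF p(2) emb_zero[OF G]] .
    moreover have "x \<oplus> \<zero> \<otimes> b = x" "y \<oplus> \<zero> \<otimes> b' = y" using cr[OF p(2)] b b' by auto
    ultimately show "p \<in> ext G b b'" using p by simp
  qed
  have "(\<zero> \<oplus> \<one> \<otimes> b, \<zero> \<oplus> \<one> \<otimes> b') \<in> ext G b b'" using memI[OF emb_zero[OF G] emb_one[OF G]] .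
  thus "(b, b') \<in> ext G b b'" using b b' by simp
  show "emb (ext G b b')" unfolding emb_def
  proof (intro conjI allI impI ballI)
    show "ext G b b' \<subseteq> carrier R \<times> carrier R"
    proof
      fix p assume "p \<in> ext G b b'"
      then obtain u u' v v' where p: "p = (u \<oplus> v \<otimes> b, u' \<oplus> v' \<otimes> b')" "(u,u') \<in> G" "(v,v') \<in> G"
        using memE by blast
      show "p \<in> carrier R \<times> carrier R" using p(1) cr[OF p(2)] cr[OF p(3)] b b' by simp
    qed
    show "(c, c) \<in> ext G b b'" if "c \<in> F" for c using sub embD(2)[OF G that] by blast
    show "y = z" if h: "(x, y) \<in> ext G b b'" "(x, z) \<in> ext G b b'" for x y z
    proof -
      obtain u1 u1' v1 v1' where p1: "(x,y) = (u1 \<oplus> v1 \<otimes> b, u1' \<oplus> v1' \<otimes> b')" "(u1,u1') \<in> G" "(v1,v1') \<in> G"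
        using memE[OF h(1)] by blast
      obtain u2 u2' v2 v2' where p2: "(x,z) = (u2 \<oplus> v2 \<otimes> b, u2' \<oplus> v2' \<otimes> b')" "(u2,u2') \<in> G" "(v2,v2') \<in> G"
        using memE[OF h(2)] by blast
      have "u1 = u2 \<and> v1 = v2"
        apply (rule rep_unique[OF G b(1,3)])
        using p1 p2 by force+
      hence "u1' = u2'" "v1' = v2'" using embD(3)[OF G] p1 p2 by blast+
      thus ?thesis using p1 p2 by simp
    qed
    show "(x \<oplus> x2, y \<oplus> y2) \<in> ext G b b'" if h: "(x, y) \<in> ext G b b'" "(x2, y2) \<in> ext G b b'" for x y x2 y2
    proof -
      obtain u1 u1' v1 v1' where p1: "(x,y) = (u1 \<oplus> v1 \<otimes> b, u1' \<oplus> v1' \<otimes> b')" "(u1,u1') \<in> G" "(v1,v1') \<in> G"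
        using memE[OF h(1)] by blast
      obtain u2 u2' v2 v2' where p2: "(x2,y2) = (u2 \<oplus> v2 \<otimes> b, u2' \<oplus> v2' \<otimes> b')" "(u2,u2') \<in> G" "(v2,v2') \<in> G"
        using memE[OF h(2)] by blast
      note c = cr[OF p1(2)] cr[OF p1(3)] cr[OF p2(2)] cr[OF p2(3)]
      have "((u1 \<oplus> u2) \<oplus> (v1 \<oplus> v2) \<otimes> b, (u1' \<oplus> u2') \<oplus> (v1' \<oplus> v2') \<otimes> b') \<in> ext G b b'"
        using memI[OF embD(4)[OF G p1(2) p2(2)] embD(4)[OF G p1(3) p2(3)]] .
      moreover have "(u1 \<oplus> u2) \<oplus> (v1 \<oplus> v2) \<otimes> b = x \<oplus> x2" using p1(1) p2(1) c b(1) by simp algebra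
      moreover have "(u1' \<oplus> u2') \<oplus> (v1' \<oplus> v2') \<otimes> b' = y \<oplus> y2" using p1(1) p2(1) c b'(1) by simp algebra
      ultimately show ?thesis by simp
    qed
    show "(x \<otimes> x2, y \<otimes> y2) \<in> ext G b b'" if h: "(x, y) \<in> ext G b b'" "(x2, y2) \<in> ext G b b'" for x y x2 y2
    proof -
      obtain u1 u1' v1 v1' where p1: "(x,y) = (u1 \<oplus> v1 \<otimes> b, u1' \<oplus> v1' \<otimes> b')" "(u1,u1') \<in> G" "(v1,v1') \<in> G"
        using memE[OF h(1)] by blast
      obtain u2 u2' v2 v2' where p2: "(x2,y2) = (u2 \<oplus> v2 \<otimes> b, u2' \<oplus> v2' \<otimes> b')" "(u2,u2') \<in> G" "(v2,v2') \<in> G"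
        using memE[OF h(2)] by blast
      note c = cr[OF p1(2)] cr[OF p1(3)] cr[OF p2(2)] cr[OF p2(3)]
      have g1: "(u1 \<otimes> u2 \<oplus> v1 \<otimes> v2 \<otimes> a, u1' \<otimes> u2' \<oplus> v1' \<otimes> v2' \<otimes> a') \<in> G"
        using embD(4)[OF G embD(5)[OF G p1(2) p2(2)] embD(5)[OF G embD(5)[OF G p1(3) p2(3)] a]] .
      have g2: "(u1 \<otimes> v2 \<oplus> v1 \<otimes> u2, u1' \<otimes> v2' \<oplus> v1' \<otimes> u2') \<in> G"
        using embD(4)[OF G embD(5)[OF G p1(2) p2(3)] embD(5)[OF G p1(3) p2(2)]] .
      have "(u1 \<otimes> u2 \<oplus> v1 \<otimes> v2 \<otimes> a \<oplus> (u1 \<otimes> v2 \<oplus> v1 \<otimes> u2) \<otimes> b, u1' \<otimes> u2' \<oplus> v1' \<otimes> v2' \<otimes> a' \<oplus> (u1' \<otimes> v2' \<oplus> v1' \<otimes> u2') \<otimes> b') \<in> ext G b b'"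
        using memI[OF g1 g2] .
      moreover have "u1 \<otimes> u2 \<oplus> v1 \<otimes> v2 \<otimes> a \<oplus> (u1 \<otimes> v2 \<oplus> v1 \<otimes> u2) \<otimes> b = x \<otimes> x2"
      proof -
        have "x \<otimes> x2 = (u1 \<oplus> v1 \<otimes> b) \<otimes> (u2 \<oplus> v2 \<otimes> b)" using p1(1) p2(1) by simp
        also have "\<dots> = u1 \<otimes> u2 \<oplus> v1 \<otimes> v2 \<otimes> (b \<otimes> b) \<oplus> (u1 \<otimes> v2 \<oplus> v1 \<otimes> u2) \<otimes> b" using c b(1) by algebra
        finally show ?thesis by (simp only: b(2))
      qed
      moreover have "u1' \<otimes> u2' \<oplus> v1' \<otimes> v2' \<otimes> a' \<oplus> (u1' \<otimes> v2' \<oplus> v1' \<otimes> u2') \<otimes> b' = y \<otimes> y2"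
      proof -
        have "y \<otimes> y2 = (u1' \<oplus> v1' \<otimes> b') \<otimes> (u2' \<oplus> v2' \<otimes> b')" using p1(1) p2(1) by simp
        also have "\<dots> = u1' \<otimes> u2' \<oplus> v1' \<otimes> v2' \<otimes> (b' \<otimes> b') \<oplus> (u1' \<otimes> v2' \<oplus> v1' \<otimes> u2') \<otimes> b'" using c b'(1) by algebra
        finally show ?thesis by (simp only: b'(2))
      qed
      ultimately show ?thesis by simp
    qed
    show "(\<ominus> x, \<ominus> y) \<in> ext G b b'" if h: "(x, y) \<in> ext G b b'" for x y
    proof -
      obtain u1 u1' v1 v1' where p1: "(x,y) = (u1 \<oplus> v1 \<otimes> b, u1' \<oplus> v1' \<otimes> b')" "(u1,u1') \<in> G" "(v1,v1') \<in> G"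
        using memE[OF h(1)] by blast
      note c = cr[OF p1(2)] cr[OF p1(3)]
      have "(\<ominus> u1 \<oplus> \<ominus> v1 \<otimes> b, \<ominus> u1' \<oplus> \<ominus> v1' \<otimes> b') \<in> ext G b b'"
        using memI[OF embD(6)[OF G p1(2)] embD(6)[OF G p1(3)]] .
      moreover have "\<ominus> u1 \<oplus> \<ominus> v1 \<otimes> b = \<ominus> x" using p1(1) c b(1) by simp algebra
      moreover have "\<ominus> u1' \<oplus> \<ominus> v1' \<otimes> b' = \<ominus> y" using p1(1) c b'(1) by simp algebra
      ultimately show ?thesis by simp
    qed
    show "(inv x, inv y) \<in> ext G b b'" if h: "(x, y) \<in> ext G b b'" "x \<noteq> \<zero>" for x y
    proof -
      obtain u u' v v' where p1: "(x,y) = (u \<oplus> v \<otimes> b, u' \<oplus> v' \<otimes> b')" "(u,u') \<in> G" "(v,v') \<in> G"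
        using memE[OF h(1)] by blast
      note c = cr[OF p1(2)] cr[OF p1(3)]
      have x: "x = u \<oplus> v \<otimes> b" and y: "y = u' \<oplus> v' \<otimes> b'" using p1(1) by auto
      define N where "N = u \<otimes> u \<ominus> v \<otimes> v \<otimes> a"
      define N' where "N' = u' \<otimes> u' \<ominus> v' \<otimes> v' \<otimes> a'"
      have gN: "(N, N') \<in> G" unfolding N_def N'_def
        using emb_minus[OF G embD(5)[OF G p1(2) p1(2)] embD(5)[OF G embD(5)[OF G p1(3) p1(3)] a]] .
      have Nc: "N \<in> carrier R" "N' \<in> carrier R" using cr[OF gN] by auto
      have uK: "u \<in> ?K" and vK: "v \<in> ?K" using p1(2,3) by force+
      have Nnz: "N \<noteq> \<zero>"
      proof
        assume N0: "N = \<zero>"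
        show False
        proof (cases "v = \<zero>")
          case True
          have "N = u \<otimes> u" unfolding N_def True using c ac by algebra
          hence "u = \<zero>" using N0 c integral_iff by auto
          hence "x = \<zero>" using x True b by simp
          thus False using h(2) by simp
        next
          case False
          define cc where "cc = u \<otimes> inv v"
          have ivc: "inv v \<in> carrier R" using inv_carr[OF c(3) False] .
          have ccc: "cc \<in> carrier R" unfolding cc_def using c ivc by simp
          have ivK: "inv v \<in> ?K" using subfield_m_inv(1)[OF K, of v] vK False by auto
          have ccK: "cc \<in> ?K" unfolding cc_def
            using subringE(6)[OF subfieldE(1)[OF K] uK ivK] .
          have e: "cc \<otimes> cc \<ominus> a = N \<otimes> (inv v \<otimes> inv v) \<oplus> (a \<otimes> ((v \<otimes> inv v) \<otimes> (v \<otimes> inv v)) \<ominus> a)"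
            unfolding cc_def N_def using c ac ivc by algebra
          have "cc \<otimes> cc \<ominus> a = \<zero>" using e N0 mul_inv[OF c(3) False] ac ivc by simp
          moreover have "(b \<ominus> cc) \<otimes> (b \<oplus> cc) = \<ominus> (cc \<otimes> cc \<ominus> b \<otimes> b)" using b(1) ccc by algebra
          ultimately have "(b \<ominus> cc) \<otimes> (b \<oplus> cc) = \<zero>" using b(2) by simp
          hence "b \<ominus> cc = \<zero> \<or> b \<oplus> cc = \<zero>" using integral_iff b ccc by simp
          moreover have "b = (b \<ominus> cc) \<oplus> cc" "b = (b \<oplus> cc) \<oplus> \<ominus> cc" using b(1) ccc by algebra+
          ultimately have "b = cc \<or> b = \<ominus> cc" using b ccc by auto
          moreover have "\<ominus> cc \<in> ?K" using subringE(5)[OF subfieldE(1)[OF K] ccK] .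
          ultimately show False using ccK b(3) by auto
        qed
      qed
      have N'nz: "N' \<noteq> \<zero>" using emb_nz[OF G gN Nnz] .
      have gi: "(inv N, inv N') \<in> G" using embD(7)[OF G gN Nnz] .
      have ic: "inv N \<in> carrier R" "inv N' \<in> carrier R" using inv_carr Nc Nnz N'nz by auto
      have gw: "(u \<otimes> inv N, u' \<otimes> inv N') \<in> G" using embD(5)[OF G p1(2) gi] .
      have gt: "(\<ominus> (v \<otimes> inv N), \<ominus> (v' \<otimes> inv N')) \<in> G" using embD(6)[OF G embD(5)[OF G p1(3) gi]] .
      have "x \<otimes> (u \<otimes> inv N \<oplus> \<ominus> (v \<otimes> inv N) \<otimes> b) = (u \<otimes> u \<ominus> v \<otimes> v \<otimes> (b \<otimes> b)) \<otimes> inv N"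
        unfolding x using c b(1) ic by algebra
      also have "\<dots> = \<one>" using b(2) mul_inv[OF Nc(1) Nnz] unfolding N_def by simp
      finally have ix: "inv x = u \<otimes> inv N \<oplus> \<ominus> (v \<otimes> inv N) \<otimes> b"
        using inv_eq x c b ic by simp
      have "y \<otimes> (u' \<otimes> inv N' \<oplus> \<ominus> (v' \<otimes> inv N') \<otimes> b') = (u' \<otimes> u' \<ominus> v' \<otimes> v' \<otimes> (b' \<otimes> b')) \<otimes> inv N'"
        unfolding y using c b'(1) ic by algebra
      also have "\<dots> = \<one>" using b'(2) mul_inv[OF Nc(2) N'nz] unfolding N'_def by simp
      finally have iy: "inv y = u' \<otimes> inv N' \<oplus> \<ominus> (v' \<otimes> inv N') \<otimes> b'"
        using inv_eq y c b' ic by simp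
      show ?thesis using memI[OF gw gt] ix iy by simp
    qed
  qed
qed

end

context qcl begin

lemma emb_total_aut:
  assumes G: "emb G" and tot: "fst ` G = carrier R"
  shows "autF R F (\<lambda>x. THE y. (x,y) \<in> G)" and "\<And>x y. (x,y) \<in> G \<Longrightarrow> (THE y. (x,y) \<in> G) = y"
proof -
  define s where "s = (\<lambda>x. THE y. (x,y) \<in> G)"
  have sval: "s x = y" if xy: "(x,y) \<in> G" for x y
  proof -
    have "\<exists>!y. (x,y) \<in> G" using xy embD(3)[OF G] by blast
    thus ?thesis unfolding s_def using xy by (rule the1_equality)
  qed
  show "\<And>x y. (x,y) \<in> G \<Longrightarrow> (THE y. (x,y) \<in> G) = y"
  proof -
    fix x y assume "(x,y) \<in> G"
    from sval[OF this] show "(THE y. (x,y) \<in> G) = y" unfolding s_def .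
  qed
  have sin: "(x, s x) \<in> G" if xc: "x \<in> carrier R" for x
  proof -
    have "x \<in> fst ` G" using xc tot by simp
    then obtain p where "p \<in> G" "x = fst p" by blast
    then obtain y where "(x,y) \<in> G" by (cases p) auto
    thus ?thesis using sval by simp
  qed
  have sc: "s x \<in> carrier R" if "x \<in> carrier R" for x using emb_carr[OF G sin[OF that]] by simp
  have hom: "s \<in> ring_hom R R"
  proof (rule ring_hom_memI)
    show "s x \<in> carrier R" if "x \<in> carrier R" for x using sc[OF that] .
    show "s (x \<otimes> y) = s x \<otimes> s y" if "x \<in> carrier R" "y \<in> carrier R" for x y
      using sval[OF embD(5)[OF G sin[OF that(1)] sin[OF that(2)]]] .
    show "s (x \<oplus> y) = s x \<oplus> s y" if "x \<in> carrier R" "y \<in> carrier R" for x y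
      using sval[OF embD(4)[OF G sin[OF that(1)] sin[OF that(2)]]] .
    show "s \<one> = \<one>" using sval[OF emb_one[OF G]] .
  qed
  have fixF: "\<forall>a\<in>F. s a = a" using sval embD(2)[OF G] by blast
  have inj: "inj_on s (carrier R)"
    using non_trivial_field_hom_is_inj[OF hom field_axioms field_axioms] .
  interpret H: ring_hom_ring R R s using ring_hom_ringI2[OF ring_axioms ring_axioms hom] .
  have imsub: "subfield (s ` carrier R) R"
    using H.img_is_subfield(2)[OF carrier_is_subfield one_not_zero] .
  have Fim: "F \<subseteq> s ` carrier R"
  proof
    fix a assume "a \<in> F"
    hence "a = s a" "a \<in> carrier R" using fixF F_carr by auto
    thus "a \<in> s ` carrier R" by blast
  qed
  have sqim: "sq_closed_set R (s ` carrier R)" unfolding sq_closed_set_def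
  proof
    fix y assume "y \<in> s ` carrier R"
    then obtain x where x: "x \<in> carrier R" "y = s x" by blast
    obtain z where z: "z \<in> carrier R" "z \<otimes> z = x" using sqR[OF x(1)] by blast
    have "s z \<otimes> s z = y" using x z H.hom_mult by metis
    thus "\<exists>w\<in>s ` carrier R. w \<otimes> w = y" using z by blast
  qed
  have "s ` carrier R = carrier R"
    using qc imsub Fim sqim unfolding quadratic_closure_def by blast
  hence "bij_betw s (carrier R) (carrier R)" using inj unfolding bij_betw_def by blast
  thus "autF R F (\<lambda>x. THE y. (x,y) \<in> G)" unfolding autF_def s_def[symmetric] using hom fixF by blast
qed

lemma extend_aut:
  assumes G0: "emb G0"
  shows "\<exists>s. autF R F s \<and> (\<forall>x y. (x,y) \<in> G0 \<longrightarrow> s x = y)"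
proof -
  let ?A = "{G. emb G \<and> G0 \<subseteq> G}"
  have "\<forall>C\<in>chains ?A. \<exists>U\<in>?A. \<forall>Y\<in>C. Y \<subseteq> U"
  proof
    fix C assume C: "C \<in> chains ?A"
    show "\<exists>U\<in>?A. \<forall>Y\<in>C. Y \<subseteq> U"
    proof (cases "C = {}")
      case True thus ?thesis using G0 by auto
    next
      case False
      have "emb (\<Union>C)"
        apply (rule emb_chain[OF False])
        using C unfolding chains_def chain_subset_def by auto
      moreover have "G0 \<subseteq> \<Union>C" using False C unfolding chains_def by auto
      ultimately show ?thesis by blast
    qed
  qed
  then obtain M where M: "M \<in> ?A" "\<forall>Y\<in>?A. M \<subseteq> Y \<longrightarrow> Y = M" using Zorn_Lemma2[of ?A] by blast
  have Me: "emb M" using M(1) by simp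
  have tot: "fst ` M = carrier R"
  proof (rule ccontr)
    assume ne: "fst ` M \<noteq> carrier R"
    obtain a where a: "a \<in> fst ` M" "\<forall>y\<in>fst ` M. y \<otimes> y \<noteq> a"
      using minimal[OF emb_dom_subfield[OF Me] emb_F_dom[OF Me] ne] by blast
    obtain a' where aa: "(a,a') \<in> M" using a(1) by force
    have ac: "a \<in> carrier R" "a' \<in> carrier R" using emb_carr[OF Me aa] by auto
    obtain b where b: "b \<in> carrier R" "b \<otimes> b = a" using sqR[OF ac(1)] by blast
    have bn: "b \<notin> fst ` M" using a(2) b(2) by blast
    obtain b' where b': "b' \<in> carrier R" "b' \<otimes> b' = a'" using sqR[OF ac(2)] by blast
    note E = ext_emb[OF Me aa b(1,2) bn b']
    have "ext M b b' \<in> ?A" using E(1,2) M(1) by auto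
    hence "ext M b b' = M" using M(2) E(2) by blast
    hence "b \<in> fst ` M" using E(3) by force
    thus False using bn by simp
  qed
  show ?thesis using emb_total_aut[OF Me tot] M(1) by blast
qed

lemma id_emb: assumes "subfield E R" "F \<subseteq> E" shows "emb (Id_on E)"
  unfolding emb_def
proof (intro conjI allI impI ballI)
  have Ec: "E \<subseteq> carrier R" using subfieldE(3)[OF assms(1)] .
  show "Id_on E \<subseteq> carrier R \<times> carrier R" using Ec by auto
  show "(a, a) \<in> Id_on E" if "a \<in> F" for a using that assms(2) by auto
  show "y = z" if "(x, y) \<in> Id_on E" "(x, z) \<in> Id_on E" for x y z using that by auto
  show "(x \<oplus> x', y \<oplus> y') \<in> Id_on E" if h: "(x, y) \<in> Id_on E" "(x', y') \<in> Id_on E" for x y x' y'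
  proof -
    have xx: "x \<in> E" "x' \<in> E" "y = x" "y' = x'" using h by auto
    have "x \<oplus> x' \<in> E" using subringE(7)[OF subfieldE(1)[OF assms(1)] xx(1,2)] .
    thus ?thesis using xx by (simp add: Id_on_def)
  qed
  show "(x \<otimes> x', y \<otimes> y') \<in> Id_on E" if h: "(x, y) \<in> Id_on E" "(x', y') \<in> Id_on E" for x y x' y'
  proof -
    have xx: "x \<in> E" "x' \<in> E" "y = x" "y' = x'" using h by auto
    have "x \<otimes> x' \<in> E" using subringE(6)[OF subfieldE(1)[OF assms(1)] xx(1,2)] .
    thus ?thesis using xx by (simp add: Id_on_def)
  qed
  show "(\<ominus> x, \<ominus> y) \<in> Id_on E" if h: "(x, y) \<in> Id_on E" for x y
  proof -
    have xx: "x \<in> E" "y = x" using h by auto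
    have "\<ominus> x \<in> E" using subringE(5)[OF subfieldE(1)[OF assms(1)] xx(1)] .
    thus ?thesis using xx by (simp add: Id_on_def)
  qed
  show "(inv x, inv y) \<in> Id_on E" if h: "(x, y) \<in> Id_on E" "x \<noteq> \<zero>" for x y
  proof -
    have xx: "x \<in> E" "y = x" using h by auto
    have "inv x \<in> E" using subfield_m_inv(1)[OF assms(1), of x] h(2) xx(1) by simp
    thus ?thesis using xx by (simp add: Id_on_def)
  qed
qed

lemma fix_F:
  assumes c: "c \<in> carrier R" "c \<notin> F"
  shows "\<exists>s. autF R F s \<and> s c \<noteq> c"
proof -
  let ?A = "{G. emb G \<and> G \<subseteq> Id \<and> (c,c) \<notin> G}"
  have idF: "Id_on F \<in> ?A" using id_emb[OF F_sub] c(2) by auto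
  have "\<forall>C\<in>chains ?A. \<exists>U\<in>?A. \<forall>Y\<in>C. Y \<subseteq> U"
  proof
    fix C assume C: "C \<in> chains ?A"
    show "\<exists>U\<in>?A. \<forall>Y\<in>C. Y \<subseteq> U"
    proof (cases "C = {}")
      case True thus ?thesis using idF by auto
    next
      case False
      have "emb (\<Union>C)"
        apply (rule emb_chain[OF False])
        using C unfolding chains_def chain_subset_def by auto
      moreover have "\<Union>C \<subseteq> Id" "(c,c) \<notin> \<Union>C" using C unfolding chains_def by auto
      ultimately show ?thesis by blast
    qed
  qed
  then obtain M where M: "M \<in> ?A" "\<forall>Y\<in>?A. M \<subseteq> Y \<longrightarrow> Y = M" using Zorn_Lemma2[of ?A] by blast
  have Me: "emb M" and MI: "M \<subseteq> Id" and cM: "(c,c) \<notin> M" using M(1) by auto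
  let ?E = "fst ` M"
  have E: "subfield ?E R" using emb_dom_subfield[OF Me] .
  have Mid: "(x,y) \<in> M \<Longrightarrow> y = x" for x y using MI by auto
  have cE: "c \<notin> ?E"
  proof
    assume "c \<in> ?E"
    then obtain y where "(c,y) \<in> M" by force
    thus False using Mid cM by blast
  qed
  have ne: "?E \<noteq> carrier R" using cE c(1) by blast
  obtain a where a: "a \<in> ?E" "\<forall>y\<in>?E. y \<otimes> y \<noteq> a"
    using minimal[OF E emb_F_dom[OF Me] ne] by blast
  obtain a' where aa: "(a,a') \<in> M" using a(1) by force
  have a'a: "a' = a" using Mid[OF aa] .
  have ac: "a \<in> carrier R" using emb_carr[OF Me aa] by auto
  obtain b where b: "b \<in> carrier R" "b \<otimes> b = a" using sqR[OF ac] by blast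
  have bn: "b \<notin> ?E" using a(2) b(2) by blast
  have b2: "b \<otimes> b = a'" using b(2) a'a by simp
  note E1 = ext_emb[OF Me aa b(1,2) bn b(1) b2]
  have E1I: "ext M b b \<subseteq> Id"
  proof
    fix p assume "p \<in> ext M b b"
    then obtain u u' v v' where p: "p = (u \<oplus> v \<otimes> b, u' \<oplus> v' \<otimes> b)" "(u,u') \<in> M" "(v,v') \<in> M"
      unfolding ext_def by blast
    thus "p \<in> Id" using Mid by auto
  qed
  have "ext M b b \<noteq> M" using E1(3) bn by force
  hence "(c,c) \<in> ext M b b" using M(2) E1(1,2) E1I by blast
  then obtain u u' v v' where p: "(c,c) = (u \<oplus> v \<otimes> b, u' \<oplus> v' \<otimes> b)" "(u,u') \<in> M" "(v,v') \<in> M"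
    unfolding ext_def by blast
  have uv: "u' = u" "v' = v" using Mid p(2,3) by auto
  have cuv: "c = u \<oplus> v \<otimes> b" using p(1) by simp
  have uvc: "u \<in> carrier R" "v \<in> carrier R" using emb_carr[OF Me p(2)] emb_carr[OF Me p(3)] by auto
  have vnz: "v \<noteq> \<zero>"
  proof
    assume "v = \<zero>"
    hence "c = u" using cuv uvc b by simp
    thus False using cE p(2) by force
  qed
  have "\<ominus> b \<otimes> \<ominus> b = b \<otimes> b" using b(1) by algebra
  hence nb: "\<ominus> b \<in> carrier R" "\<ominus> b \<otimes> \<ominus> b = a'" using b(1) b2 by simp_all
  note E2 = ext_emb[OF Me aa b(1,2) bn nb]
  have "(u \<oplus> v \<otimes> b, u \<oplus> v \<otimes> \<ominus> b) \<in> ext M b (\<ominus> b)"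
    using p(2,3) unfolding uv ext_def by blast
  hence cm: "(c, u \<oplus> v \<otimes> \<ominus> b) \<in> ext M b (\<ominus> b)" using cuv by simp
  obtain s where s: "autF R F s" "\<forall>x y. (x,y) \<in> ext M b (\<ominus> b) \<longrightarrow> s x = y"
    using extend_aut[OF E2(1)] by blast
  have sc: "s c = u \<oplus> v \<otimes> \<ominus> b" using s(2) cm by blast
  have "s c \<noteq> c"
  proof
    assume "s c = c"
    hence eq: "u \<oplus> v \<otimes> \<ominus> b = u \<oplus> v \<otimes> b" using sc cuv by simp
    have "(\<one> \<oplus> \<one>) \<otimes> (v \<otimes> b) = (u \<oplus> v \<otimes> b) \<ominus> (u \<oplus> v \<otimes> \<ominus> b)" using uvc b(1) by algebra
    also have "\<dots> = \<zero>" unfolding eq using uvc b(1) by algebra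
    finally have "(\<one> \<oplus> \<one>) \<otimes> (v \<otimes> b) = \<zero>" .
    hence "v \<otimes> b = \<zero>" using integral_iff two uvc b(1) by simp
    hence "b = \<zero>" using integral_iff vnz uvc b(1) by simp
    moreover have "\<zero> \<in> ?E" using subringE(2)[OF subfieldE(1)[OF E]] .
    ultimately show False using bn by simp
  qed
  thus ?thesis using s(1) by blast
qed

end

context qcl begin

lemma sqrt_algebraic:
  assumes x: "x \<in> carrier R" "algebraic F x" and y: "y \<in> carrier R" "y \<otimes> y = x"
  shows "algebraic F y"
proof -
  let ?Kx = "simple_extension F x"
  have Fr: "subring F R" using subfieldE(1)[OF F_sub] .
  have Kx: "subfield ?Kx R" using simple_extension_is_subfield[OF F_sub x(1)] x(2) by (simp add: over_def)
  have fd1: "finite_dimension F ?Kx" using finite_dimension_simple_extension[OF F_sub x(1)] x(2) by (simp add: over_def)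
  have xK: "x \<in> ?Kx" using simple_extension_mem[OF Fr x(1)] .
  let ?p = "[\<one>, \<zero>, \<ominus> x]"
  have pK: "?p \<in> carrier (?Kx[X])"
  proof -
    have "\<one> \<in> ?Kx" "\<zero> \<in> ?Kx" "\<ominus> x \<in> ?Kx"
      using subringE(2,3)[OF subfieldE(1)[OF Kx]] subringE(5)[OF subfieldE(1)[OF Kx] xK] by auto
    thus ?thesis unfolding sym[OF univ_poly_carrier] polynomial_def by auto
  qed
  have ev: "eval ?p y = \<zero>"
  proof -
    have "eval ?p y = \<one> \<otimes> y [^] (2::nat) \<oplus> (\<zero> \<otimes> y [^] (1::nat) \<oplus> (\<ominus> x \<otimes> y [^] (0::nat) \<oplus> \<zero>))"
      by (simp add: numeral_2_eq_2)
    also have "\<dots> = y \<otimes> y \<ominus> x" using x(1) y(1) by (simp add: numeral_2_eq_2) algebra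
    also have "\<dots> = \<zero>" using y(2) x(1) by (simp add: r_neg a_minus_def)
    finally show ?thesis .
  qed
  have algy: "algebraic ?Kx y" using algebraicI[OF pK _ ev] by (simp add: over_def)
  let ?Kxy = "simple_extension ?Kx y"
  have fd2: "finite_dimension ?Kx ?Kxy" using finite_dimension_simple_extension[OF Kx y(1)] algy by (simp add: over_def)
  have fd: "finite_dimension F ?Kxy" using telescopic_base_dim(1)[OF F_sub Kx fd1 fd2] .
  have sr: "subring ?Kxy R" using simple_extension_is_subring[OF subfieldE(1)[OF Kx] y(1)] .
  have "y \<in> ?Kxy" using simple_extension_mem[OF subfieldE(1)[OF Kx] y(1)] .
  thus ?thesis using finite_dimension_imp_algebraic[OF F_sub sr fd] by (simp add: over_def)
qed

lemma all_algebraic: "x \<in> carrier R \<Longrightarrow> algebraic F x"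
proof -
  let ?A = "{x \<in> carrier R. algebraic F x}"
  have A: "subfield ?A R" using subfield_of_algebraics[OF F_sub] unfolding over_def .
  have FA: "F \<subseteq> ?A" using algebraic_self[OF subfieldE(1)[OF F_sub]] F_carr by (auto simp: over_def)
  have sq: "sq_closed_set R ?A" unfolding sq_closed_set_def
  proof
    fix x assume "x \<in> ?A"
    then have x: "x \<in> carrier R" "algebraic F x" by auto
    obtain y where y: "y \<in> carrier R" "y \<otimes> y = x" using sqR[OF x(1)] by blast
    have "algebraic F y" using sqrt_algebraic[OF x y] .
    thus "\<exists>y\<in>?A. y \<otimes> y = x" using y by blast
  qed
  have "?A = carrier R" using qc A FA sq unfolding quadratic_closure_def by blast
  thus "x \<in> carrier R \<Longrightarrow> algebraic F x" by blast
qed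

end

lemma card_set_mset_le_size: "card (set_mset M) \<le> size M"
proof (induction M)
  case empty thus ?case by simp
next
  case (add x M)
  have "card (set_mset (add_mset x M)) \<le> Suc (card (set_mset M))"
    by (simp add: card_insert_le_m1 card_insert_if)
  thus ?case using add by simp
qed

context qcl begin

lemma autD: assumes "autF R F s"
  shows "s \<in> ring_hom R R" "bij_betw s (carrier R) (carrier R)" "\<And>a. a \<in> F \<Longrightarrow> s a = a"
  using assms unfolding autF_def by auto

lemma aut_carr: "autF R F s \<Longrightarrow> x \<in> carrier R \<Longrightarrow> s x \<in> carrier R"
  unfolding autF_def bij_betw_def by auto

lemma aut_inj: "autF R F s \<Longrightarrow> inj_on s (carrier R)"
  unfolding autF_def bij_betw_def by auto

lemma aut_img: "autF R F s \<Longrightarrow> s ` carrier R = carrier R"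
  unfolding autF_def bij_betw_def by auto

lemma aut_hom: assumes "autF R F s" shows "ring_hom_ring R R s"
  using ring_hom_ringI2[OF ring_axioms ring_axioms autD(1)[OF assms]] .

lemma aut_id: "autF R F id"
  unfolding autF_def by (simp add: bij_betw_id)

lemma aut_comp: assumes "autF R F s" "autF R F t" shows "autF R F (s \<circ> t)"
  unfolding autF_def using ring_hom_trans[OF autD(1)[OF assms(2)] autD(1)[OF assms(1)]]
    bij_betw_trans[OF autD(2)[OF assms(2)] autD(2)[OF assms(1)]] autD(3)[OF assms(1)] autD(3)[OF assms(2)]
  by simp

lemma aut_inv:
  assumes s: "autF R F s"
  shows "autF R F (inv_into (carrier R) s)"
    "\<And>x. x \<in> carrier R \<Longrightarrow> inv_into (carrier R) s (s x) = x"
    "\<And>x. x \<in> carrier R \<Longrightarrow> s (inv_into (carrier R) s x) = x"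
proof -
  let ?t = "inv_into (carrier R) s"
  have inj: "inj_on s (carrier R)" using aut_inj[OF s] .
  have img: "s ` carrier R = carrier R" using aut_img[OF s] .
  show ts: "\<And>x. x \<in> carrier R \<Longrightarrow> ?t (s x) = x" using inv_into_f_f[OF inj] by blast
  show st: "\<And>x. x \<in> carrier R \<Longrightarrow> s (?t x) = x" using f_inv_into_f[of _ s "carrier R"] img by simp
  have tc: "\<And>x. x \<in> carrier R \<Longrightarrow> ?t x \<in> carrier R" using inv_into_into[of _ s "carrier R"] img by simp
  interpret H: ring_hom_ring R R s using aut_hom[OF s] .
  have hom: "?t \<in> ring_hom R R"
  proof (rule ring_hom_memI)
    show "?t x \<in> carrier R" if "x \<in> carrier R" for x using tc[OF that] .
    show "?t (x \<otimes> y) = ?t x \<otimes> ?t y" if xy: "x \<in> carrier R" "y \<in> carrier R" for x y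
    proof -
      have e1: "s (?t x \<otimes> ?t y) = x \<otimes> y" using H.hom_mult tc xy st by simp
      have "?t (s (?t x \<otimes> ?t y)) = ?t x \<otimes> ?t y" using ts[OF m_closed[OF tc[OF xy(1)] tc[OF xy(2)]]] .
      thus ?thesis by (simp only: e1)
    qed
    show "?t (x \<oplus> y) = ?t x \<oplus> ?t y" if xy: "x \<in> carrier R" "y \<in> carrier R" for x y
    proof -
      have e1: "s (?t x \<oplus> ?t y) = x \<oplus> y" using H.hom_add tc xy st by simp
      have "?t (s (?t x \<oplus> ?t y)) = ?t x \<oplus> ?t y" using ts[OF add.m_closed[OF tc[OF xy(1)] tc[OF xy(2)]]] .
      thus ?thesis by (simp only: e1)
    qed
    show "?t \<one> = \<one>" using ts[of \<one>] H.hom_one by simp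
  qed
  have "bij_betw ?t (carrier R) (carrier R)"
    using bij_betw_inv_into[OF autD(2)[OF s]] .
  moreover have "\<forall>a\<in>F. ?t a = a"
  proof
    fix a assume a: "a \<in> F"
    hence "s a = a" "a \<in> carrier R" using autD(3)[OF s] F_carr by auto
    thus "?t a = a" using ts[of a] by simp
  qed
  ultimately show "autF R F ?t" unfolding autF_def using hom by blast
qed

lemma aut_eval_F:
  assumes s: "autF R F s" and p: "p \<in> carrier (F[X])" and x: "x \<in> carrier R"
  shows "eval p (s x) = s (eval p x)"
proof -
  interpret H: ring_hom_ring R R s using aut_hom[OF s] .
  have "set p \<subseteq> F" using p polynomial_incl unfolding sym[OF univ_poly_carrier] by blast
  hence "map s p = p" using autD(3)[OF s] by (induct p) auto
  thus ?thesis using H.eval_hom[OF subfieldE(1)[OF F_sub] x p] by simp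
qed

lemma map_aut_hom:
  assumes s: "autF R F s"
  shows "map s \<in> ring_hom (poly_ring R) (poly_ring R)"
proof -
  interpret H: ring_hom_ring R R s using aut_hom[OF s] .
  have pc: "map s p \<in> carrier (poly_ring R)" if "p \<in> carrier (poly_ring R)" for p
    using polynomial_hom[OF autD(1)[OF s] field_axioms field_axioms that] .
  have setc: "set p \<subseteq> carrier R" if "p \<in> carrier (poly_ring R)" for p
    using that polynomial_incl unfolding sym[OF univ_poly_carrier] by blast
  interpret UP: ring "poly_ring R" using univ_poly_is_ring[OF carrier_is_subring] .
  show ?thesis
  proof (rule ring_hom_memI)
    show "map s p \<in> carrier (poly_ring R)" if "p \<in> carrier (poly_ring R)" for p using pc[OF that] .
    show "map s (p \<otimes>\<^bsub>poly_ring R\<^esub> q) = map s p \<otimes>\<^bsub>poly_ring R\<^esub> map s q"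
      if pq: "p \<in> carrier (poly_ring R)" "q \<in> carrier (poly_ring R)" for p q
    proof -
      have m: "p \<otimes>\<^bsub>poly_ring R\<^esub> q \<in> carrier (poly_ring R)" using UP.m_closed[OF pq] .
      have pm: "polynomial (carrier R) (map s (poly_mult p q))"
        using pc[OF m] unfolding univ_poly_mult univ_poly_carrier[symmetric] .
      have A: "normalize (map s (poly_mult p q)) = poly_mult (map s p) (map s q)"
        using H.poly_mult_hom'[OF setc[OF pq(1)] setc[OF pq(2)]] .
      have B: "normalize (map s (poly_mult p q)) = map s (poly_mult p q)"
        using normalize_polynomial[OF pm] .
      show ?thesis unfolding univ_poly_mult using trans[OF B[symmetric] A] .
    qed
    show "map s (p \<oplus>\<^bsub>poly_ring R\<^esub> q) = map s p \<oplus>\<^bsub>poly_ring R\<^esub> map s q"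
      if pq: "p \<in> carrier (poly_ring R)" "q \<in> carrier (poly_ring R)" for p q
    proof -
      have m: "p \<oplus>\<^bsub>poly_ring R\<^esub> q \<in> carrier (poly_ring R)" using UP.add.m_closed[OF pq] .
      have pm: "polynomial (carrier R) (map s (poly_add p q))"
        using pc[OF m] unfolding univ_poly_add univ_poly_carrier[symmetric] .
      have A: "normalize (map s (poly_add p q)) = poly_add (map s p) (map s q)"
        using H.poly_add_hom'[OF setc[OF pq(1)] setc[OF pq(2)]] .
      have B: "normalize (map s (poly_add p q)) = map s (poly_add p q)"
        using normalize_polynomial[OF pm] .
      show ?thesis unfolding univ_poly_add using trans[OF B[symmetric] A] .
    qed
    show "map s \<one>\<^bsub>poly_ring R\<^esub> = \<one>\<^bsub>poly_ring R\<^esub>" unfolding univ_poly_one by simp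
  qed
qed

end

context qcl begin

lemma lin_poly: "z \<in> carrier R \<Longrightarrow> [\<one>, \<ominus> z] \<in> carrier (poly_ring R)"
  unfolding sym[OF univ_poly_carrier] polynomial_def by auto

lemma lin_prod:
  assumes "finite A" "A \<subseteq> carrier R"
  shows "finprod (poly_ring R) (\<lambda>z. [\<one>, \<ominus> z]) A \<in> carrier (poly_ring R) \<and>
         finprod (poly_ring R) (\<lambda>z. [\<one>, \<ominus> z]) A \<noteq> [] \<and>
         degree (finprod (poly_ring R) (\<lambda>z. [\<one>, \<ominus> z]) A) = card A"
  using assms
proof (induction A rule: finite_induct)
  interpret UP: cring "poly_ring R" using univ_poly_is_cring[OF carrier_is_subring] .
  case empty
  have "finprod (poly_ring R) (\<lambda>z. [\<one>, \<ominus> z]) {} = [\<one>]" using UP.finprod_empty univ_poly_one by metis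
  thus ?case using UP.one_closed univ_poly_one by simp
next
  interpret UP: cring "poly_ring R" using univ_poly_is_cring[OF carrier_is_subring] .
  case (insert a A)
  let ?f = "\<lambda>z. [\<one>, \<ominus> z]"
  have ac: "a \<in> carrier R" and Ac: "A \<subseteq> carrier R" using insert(4) by auto
  have IH: "finprod (poly_ring R) ?f A \<in> carrier (poly_ring R)" "finprod (poly_ring R) ?f A \<noteq> []"
    "degree (finprod (poly_ring R) ?f A) = card A" using insert(3)[OF Ac] by auto
  have fA: "?f \<in> A \<rightarrow> carrier (poly_ring R)" using lin_poly Ac by auto
  have eq: "finprod (poly_ring R) ?f (insert a A) = ?f a \<otimes>\<^bsub>poly_ring R\<^esub> finprod (poly_ring R) ?f A"
    using UP.finprod_insert[OF insert(1,2) fA lin_poly[OF ac]] .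
  have cl: "finprod (poly_ring R) ?f (insert a A) \<in> carrier (poly_ring R)"
    unfolding eq using UP.m_closed[OF lin_poly[OF ac] IH(1)] .
  have "degree (poly_mult (?f a) (finprod (poly_ring R) ?f A)) = degree (?f a) + degree (finprod (poly_ring R) ?f A)"
    using poly_mult_degree_eq[OF carrier_is_subring, of "?f a" "finprod (poly_ring R) ?f A"]
      lin_poly[OF ac] IH(1,2) unfolding sym[OF univ_poly_carrier] by simp
  hence dg: "degree (finprod (poly_ring R) ?f (insert a A)) = Suc (card A)"
    unfolding eq univ_poly_mult using IH(3) by simp
  hence "finprod (poly_ring R) ?f (insert a A) \<noteq> []" by auto
  thus ?case using cl dg insert(1,2) by simp
qed

lemma orbit:
  assumes x: "x \<in> carrier R"
  shows "finite {s x | s. autF R F s}" "card {s x | s. autF R F s} = degree (Irr F x)"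
        "\<And>r. r \<in> {s x | s. autF R F s} \<Longrightarrow> eval (Irr F x) r = \<zero>"
proof -
  define Or where "Or = {s x | s. autF R F s}"
  define p where "p = Irr F x"
  interpret UP: cring "poly_ring R" using univ_poly_is_cring[OF carrier_is_subring] .
  have alg: "(algebraic over F) x" using all_algebraic[OF x] by (simp add: over_def)
  have pF: "p \<in> carrier (F[X])" unfolding p_def using IrrE(1)[OF F_sub x alg] .
  have px: "eval p x = \<zero>" unfolding p_def using IrrE(4)[OF F_sub x alg] .
  have pR: "p \<in> carrier (poly_ring R)"
    using carrier_polynomial[OF subfieldE(1)[OF F_sub]] pF unfolding sym[OF univ_poly_carrier] by blast
  have pne: "p \<noteq> []"
    using pirreducible_degree[OF F_sub pF] IrrE(2)[OF F_sub x alg] unfolding p_def by auto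
  have Oc: "Or \<subseteq> carrier R" unfolding Or_def using aut_carr x by blast
  have roots: "eval p r = \<zero>" if rO: "r \<in> Or" for r
  proof -
    obtain s where s: "autF R F s" "r = s x" using rO unfolding Or_def by blast
    interpret H: ring_hom_ring R R s using aut_hom[OF s(1)] .
    show ?thesis using aut_eval_F[OF s(1) pF x] px s(2) by simp
  qed
  have Oroot: "Or \<subseteq> {r. is_root p r}" using roots Oc pne unfolding is_root_def by blast
  have fin: "finite Or" using finite_subset[OF Oroot finite_number_of_roots[OF pR]] .
  have "Or \<subseteq> set_mset (roots p)" using Oroot roots_mem_iff_is_root[OF pR] by blast
  hence "card Or \<le> card (set_mset (roots p))" by (simp add: card_mono)
  also have "\<dots> \<le> size (roots p)" by (rule card_set_mset_le_size)
  also have "\<dots> \<le> degree p" using size_roots_le_degree[OF pR] .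
  finally have le1: "card Or \<le> degree p" .
  have xO: "x \<in> Or"
  proof -
    have "x = id x" by simp
    thus ?thesis unfolding Or_def using aut_id by blast
  qed
  let ?f = "\<lambda>z. [\<one>, \<ominus> z]"
  define q where "q = finprod (poly_ring R) ?f Or"
  have qprops: "q \<in> carrier (poly_ring R)" "q \<noteq> []" "degree q = card Or"
    using lin_prod[OF fin Oc] unfolding q_def by auto
  have fO: "?f \<in> Or \<rightarrow> carrier (poly_ring R)" using lin_poly Oc by auto
  have inv: "map s q = q" if s: "autF R F s" for s
  proof -
    interpret MH: ring_hom_cring "poly_ring R" "poly_ring R" "map s"
      using RingHom.ring_hom_cringI[OF ring_hom_ringI2[OF UP.ring_axioms UP.ring_axioms map_aut_hom[OF s]]
          UP.cring_axioms UP.cring_axioms] .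
    interpret H: ring_hom_ring R R s using aut_hom[OF s] .
    have "map s q = finprod (poly_ring R) (map s \<circ> ?f) Or" unfolding q_def using MH.hom_finprod[OF fO] .
    also have "\<dots> = finprod (poly_ring R) (\<lambda>z. ?f (s z)) Or"
    proof (rule UP.finprod_cong')
      show "Or = Or" ..
      show "(\<lambda>z. ?f (s z)) \<in> Or \<rightarrow> carrier (poly_ring R)" using lin_poly aut_carr[OF s] Oc by auto
      show "(map s \<circ> ?f) z = ?f (s z)" if "z \<in> Or" for z
        using that Oc H.hom_one H.hom_a_inv by auto
    qed
    also have "\<dots> = finprod (poly_ring R) ?f (s ` Or)"
    proof -
      have i: "inj_on s Or" using inj_on_subset[OF aut_inj[OF s] Oc] .
      have fs: "?f \<in> (s ` Or) \<rightarrow> carrier (poly_ring R)" using lin_poly aut_carr[OF s] Oc by auto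
      show ?thesis using UP.finprod_reindex[OF fs i] by simp
    qed
    also have "s ` Or = Or"
    proof
      show "s ` Or \<subseteq> Or"
      proof
        fix r assume "r \<in> s ` Or"
        then obtain t where t: "autF R F t" "r = s (t x)" unfolding Or_def by blast
        have "r = (s \<circ> t) x" using t by simp
        thus "r \<in> Or" unfolding Or_def using aut_comp[OF s t(1)] by blast
      qed
      show "Or \<subseteq> s ` Or"
      proof
        fix r assume "r \<in> Or"
        then obtain t where t: "autF R F t" "r = t x" unfolding Or_def by blast
        let ?u = "inv_into (carrier R) s \<circ> t"
        have u: "autF R F ?u" using aut_comp[OF aut_inv(1)[OF s] t(1)] .
        have "s (?u x) = r" using aut_inv(3)[OF s] aut_carr[OF t(1) x] t(2) by simp
        moreover have "?u x \<in> Or" unfolding Or_def using u by blast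
        ultimately show "r \<in> s ` Or" by blast
      qed
    qed
    finally show ?thesis unfolding q_def .
  qed
  have qset: "set q \<subseteq> carrier R"
    using qprops(1) polynomial_incl unfolding sym[OF univ_poly_carrier] by blast
  have qsetF: "set q \<subseteq> F"
  proof
    fix c assume c: "c \<in> set q"
    have fixc: "s c = c" if "autF R F s" for s
    proof -
      have "map s q = q" using inv[OF that] .
      thus ?thesis using c by (metis map_eq_conv list.map_id id_apply)
    qed
    show "c \<in> F"
    proof (rule ccontr)
      assume "c \<notin> F"
      moreover have "c \<in> carrier R" using qset c by blast
      ultimately obtain s where "autF R F s" "s c \<noteq> c" using fix_F by blast
      thus False using fixc by simp
    qed
  qed
  have qF: "q \<in> carrier (F[X])"
    using qprops(1) qsetF unfolding sym[OF univ_poly_carrier] polynomial_def by auto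
  have evq: "eval q x = \<zero>"
  proof -
    have fin': "finite (Or - {x})" using fin by simp
    have nin: "x \<notin> Or - {x}" by simp
    have fO': "?f \<in> (Or - {x}) \<rightarrow> carrier (poly_ring R)" using fO by auto
    have "q = finprod (poly_ring R) ?f (insert x (Or - {x}))" using insert_Diff[OF xO] unfolding q_def by simp
    also have "\<dots> = ?f x \<otimes>\<^bsub>poly_ring R\<^esub> finprod (poly_ring R) ?f (Or - {x})"
      using UP.finprod_insert[OF fin' nin fO' lin_poly[OF x]] .
    finally have qeq: "q = ?f x \<otimes>\<^bsub>poly_ring R\<^esub> finprod (poly_ring R) ?f (Or - {x})" .
    have q'c: "finprod (poly_ring R) ?f (Or - {x}) \<in> carrier (poly_ring R)"
      using UP.finprod_closed[OF fO'] .
    have ev0: "eval (?f x) x = \<zero>" using x by (auto, algebra)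
    have hom: "(\<lambda>p. eval p x) \<in> ring_hom (poly_ring R) R" using eval_is_hom[OF carrier_is_subring x] .
    have "eval q x = eval (?f x) x \<otimes> eval (finprod (poly_ring R) ?f (Or - {x})) x"
      unfolding qeq using ring_hom_mult[OF hom lin_poly[OF x] q'c] .
    also have "\<dots> = \<zero>" unfolding ev0 using ring_hom_closed[OF hom q'c] by simp
    finally show ?thesis .
  qed
  have "p pdivides q" unfolding p_def using Irr_minimal[OF F_sub x alg qF evq] .
  hence le2: "degree p \<le> degree q" using pdivides_imp_degree_le[OF subfieldE(1)[OF F_sub] pF qF qprops(2)] by simp
  show "finite {s x | s. autF R F s}" using fin unfolding Or_def .
  show "card {s x | s. autF R F s} = degree (Irr F x)" using le1 le2 qprops(3) unfolding Or_def p_def by simp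
  show "\<And>r. r \<in> {s x | s. autF R F s} \<Longrightarrow> eval (Irr F x) r = \<zero>" using roots unfolding Or_def p_def by blast
qed

end

context qcl begin

lemma span_one: "Span F [\<one>] \<subseteq> F"
proof
  fix u assume "u \<in> Span F [\<one>]"
  hence "u \<in> line_extension F \<one> {\<zero>}" by simp
  then obtain k where k: "k \<in> F" "u = k \<otimes> \<one> \<oplus> \<zero>" unfolding line_extension_mem_iff by blast
  thus "u \<in> F" using F_carr by auto
qed

lemma L_stable:
  assumes L: "quadratic_ext R F L" and s: "autF R F s" and z: "z \<in> L"
  shows "s z \<in> L"
proof (cases "z \<in> F")
  case True thus ?thesis using autD(3)[OF s] z by simp
next
  case False
  have Ls: "subfield L R" and FL: "F \<subseteq> L" and dim: "dimension 2 F L"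
    using L unfolding quadratic_ext_def by auto
  have Lc: "L \<subseteq> carrier R" using subfieldE(3)[OF Ls] .
  have zc: "z \<in> carrier R" using z Lc by auto
  have i1: "independent F [\<one>]"
  proof (rule li_Cons)
    show "\<one> \<in> carrier R" by simp
    show "\<one> \<notin> Span F []" by simp
    show "independent F []" by simp
  qed
  have i2: "independent F [z, \<one>]"
  proof (rule li_Cons[OF zc _ i1])
    show "z \<notin> Span F [\<one>]" using span_one False by blast
  qed
  have setL: "set [z, \<one>] \<subseteq> L" using z subringE(3)[OF subfieldE(1)[OF Ls]] by simp
  have span: "Span F [z, \<one>] = L"
    using independent_length_eq_dimension[OF F_sub dim i2 setL] by simp
  have "z \<otimes> z \<in> L" using subringE(6)[OF subfieldE(1)[OF Ls] z z] .
  hence "z \<otimes> z \<in> line_extension F z (Span F [\<one>])" using span by simp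
  then obtain k1 w where k1: "k1 \<in> F" "w \<in> Span F [\<one>]" "z \<otimes> z = k1 \<otimes> z \<oplus> w"
    unfolding line_extension_mem_iff by blast
  have k2: "w \<in> F" using span_one k1(2) by blast
  have kc: "k1 \<in> carrier R" "w \<in> carrier R" using k1(1) k2 F_carr by auto
  interpret H: ring_hom_ring R R s using aut_hom[OF s] .
  have szc: "s z \<in> carrier R" using aut_carr[OF s zc] .
  have "s z \<otimes> s z = s (z \<otimes> z)" using zc by simp
  also have "\<dots> = s k1 \<otimes> s z \<oplus> s w" unfolding k1(3) using kc zc by simp
  finally have sz2: "s z \<otimes> s z = k1 \<otimes> s z \<oplus> w" using autD(3)[OF s] k1(1) k2 by simp
  have "(s z \<ominus> z) \<otimes> (s z \<ominus> (k1 \<ominus> z)) = (s z \<otimes> s z \<ominus> (k1 \<otimes> s z \<oplus> w)) \<ominus> (z \<otimes> z \<ominus> (k1 \<otimes> z \<oplus> w))"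
    using szc zc kc by algebra
  also have "\<dots> = \<zero>" unfolding sz2 k1(3)[symmetric] using szc zc kc by algebra
  finally have "(s z \<ominus> z) \<otimes> (s z \<ominus> (k1 \<ominus> z)) = \<zero>" .
  hence "s z \<ominus> z = \<zero> \<or> s z \<ominus> (k1 \<ominus> z) = \<zero>" using integral_iff szc zc kc by simp
  moreover have "s z = (s z \<ominus> z) \<oplus> z" "s z = (s z \<ominus> (k1 \<ominus> z)) \<oplus> (k1 \<ominus> z)" using szc zc kc by algebra+
  ultimately have "s z = z \<or> s z = k1 \<ominus> z" using szc zc kc by auto
  moreover have "k1 \<ominus> z \<in> L" using sub_minus[OF Ls _ z] k1(1) FL by auto
  ultimately show ?thesis using z by auto
qed

lemma L_stable_eq:
  assumes L: "quadratic_ext R F L" and s: "autF R F s"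
  shows "s ` L = L"
proof
  show "s ` L \<subseteq> L" using L_stable[OF L s] by blast
  show "L \<subseteq> s ` L"
  proof
    fix z assume z: "z \<in> L"
    have Lc: "L \<subseteq> carrier R" using L unfolding quadratic_ext_def using subfieldE(3) by blast
    let ?t = "inv_into (carrier R) s"
    have "?t z \<in> L" using L_stable[OF L aut_inv(1)[OF s] z] .
    moreover have "s (?t z) = z" using aut_inv(3)[OF s] z Lc by auto
    ultimately show "z \<in> s ` L" by force
  qed
qed

end

context qcl begin

lemma aut_nz: assumes s: "autF R F s" and x: "x \<in> carrier R" "x \<noteq> \<zero>" shows "s x \<noteq> \<zero>"
proof
  assume "s x = \<zero>"
  interpret H: ring_hom_ring R R s using aut_hom[OF s] .
  have "s x = s \<zero>" using \<open>s x = \<zero>\<close> by simp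
  hence "x = \<zero>" using inj_onD[OF aut_inj[OF s] _ x(1) zero_closed] by simp
  thus False using x(2) by simp
qed

lemma aut_m_inv: assumes s: "autF R F s" and x: "x \<in> carrier R" "x \<noteq> \<zero>" shows "s (inv x) = inv (s x)"
proof -
  interpret H: ring_hom_ring R R s using aut_hom[OF s] .
  have ic: "inv x \<in> carrier R" using inv_carr[OF x] .
  have "s x \<otimes> s (inv x) = s (x \<otimes> inv x)" using x(1) ic by simp
  also have "\<dots> = \<one>" using mul_inv[OF x] by simp
  finally have "s x \<otimes> s (inv x) = \<one>" .
  thus ?thesis using inv_eq[of "s x" "s (inv x)"] aut_carr[OF s] x(1) ic by simp
qed

lemma gen_img:
  assumes s: "autF R F s" and H: "H \<subseteq> carrier R"
  shows "s ` generate_field R H \<subseteq> generate_field R (s ` H)"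
proof
  fix y assume "y \<in> s ` generate_field R H"
  then obtain x where x: "x \<in> generate_field R H" "y = s x" by blast
  interpret Hm: ring_hom_ring R R s using aut_hom[OF s] .
  have "s x \<in> generate_field R (s ` H)" using x(1)
  proof (induction rule: generate_field.induct)
    case one
    thus ?case using generate_field.one by simp
  next
    case (incl h)
    hence "s h \<in> s ` H" by (rule imageI)
    thus ?case by (rule generate_field.incl)
  next
    case (a_inv h)
    have "h \<in> carrier R" using generate_field_in_carrier[OF H a_inv(1)] .
    hence "s (\<ominus> h) = \<ominus> s h" by simp
    thus ?case using generate_field.a_inv[OF a_inv(2)] by simp
  next
    case (m_inv h)
    have hc: "h \<in> carrier R" using generate_field_in_carrier[OF H m_inv(1)] .
    have "s (inv h) = inv (s h)" using aut_m_inv[OF s hc m_inv(2)] .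
    moreover have "s h \<noteq> \<zero>" using aut_nz[OF s hc m_inv(2)] .
    ultimately show ?case using generate_field.m_inv[OF m_inv(3)] by simp
  next
    case (eng_add h1 h2)
    have "h1 \<in> carrier R" "h2 \<in> carrier R" using generate_field_in_carrier[OF H] eng_add(1,2) by auto
    hence "s (h1 \<oplus> h2) = s h1 \<oplus> s h2" by simp
    thus ?case using generate_field.eng_add[OF eng_add(3,4)] by simp
  next
    case (eng_mult h1 h2)
    have "h1 \<in> carrier R" "h2 \<in> carrier R" using generate_field_in_carrier[OF H] eng_mult(1,2) by auto
    hence "s (h1 \<otimes> h2) = s h1 \<otimes> s h2" by simp
    thus ?case using generate_field.eng_mult[OF eng_mult(3,4)] by simp
  qed
  thus "y \<in> generate_field R (s ` H)" using x(2) by simp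
qed

lemma img_eq_from_sub:
  assumes s: "autF R F s" and T: "T \<subseteq> carrier R"
    and st: "\<And>s. autF R F s \<Longrightarrow> s ` T \<subseteq> T"
  shows "s ` T = T"
proof
  show "s ` T \<subseteq> T" using st[OF s] .
  show "T \<subseteq> s ` T"
  proof
    fix z assume z: "z \<in> T"
    let ?t = "inv_into (carrier R) s"
    have "?t z \<in> T" using st[OF aut_inv(1)[OF s]] z by blast
    moreover have "s (?t z) = z" using aut_inv(3)[OF s] z T by auto
    ultimately show "z \<in> s ` T" by force
  qed
qed


lemma M_stable:
  assumes s: "autF R F s" and Ts: "subfield T R" and sT: "s ` T = T"
    and Ls: "subfield L R" and sL: "s ` L = L"
    and q: "quadratic_ext R T M" and g: "galois_ext R L M"
  shows "quadratic_ext R T (s ` M)" "galois_ext R L (s ` M)"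
proof -
  interpret H: ring_hom_ring R R s using aut_hom[OF s] .
  have Ms: "subfield M R" "T \<subseteq> M" "dimension 2 T M" using q unfolding quadratic_ext_def by auto
  have Mc: "M \<subseteq> carrier R" using subfieldE(3)[OF Ms(1)] .
  have Lc: "L \<subseteq> carrier R" using subfieldE(3)[OF Ls] .
  have sMs: "subfield (s ` M) R" using H.img_is_subfield(2)[OF Ms(1) one_not_zero] .
  have injM: "inj_on s M" using inj_on_subset[OF aut_inj[OF s] Mc] .
  have "dimension 2 (s ` T) (s ` M)" using H.inj_hom_dimension[OF Ts one_not_zero injM Ms(3)] .
  hence dim: "dimension 2 T (s ` M)" using sT by simp
  have TsM: "T \<subseteq> s ` M" using image_mono[OF Ms(2), of s] sT by simp
  show "quadratic_ext R T (s ` M)" unfolding quadratic_ext_def using Ts sMs TsM dim by blast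
  have LM: "L \<subseteq> M" using g unfolding galois_ext_def by blast
  have LsM: "L \<subseteq> s ` M" using image_mono[OF LM, of s] sL by simp
  have gal: "algebraic L z \<and> (\<exists>rs. distinct rs \<and> set rs \<subseteq> M \<and> length rs = degree (Irr L z) \<and>
              (\<forall>r\<in>set rs. eval (Irr L z) r = \<zero>))" if "z \<in> M" for z
    using g that unfolding galois_ext_def by blast
  let ?t = "inv_into (carrier R) s"
  have t: "autF R F ?t" using aut_inv(1)[OF s] .
  interpret Ht: ring_hom_ring R R ?t using aut_hom[OF t] .
  have tL: "?t ` L = L"
  proof -
    have "?t ` L = ?t ` (s ` L)" using sL by simp
    also have "\<dots> = (\<lambda>x. ?t (s x)) ` L" by (simp add: image_image)
    also have "\<dots> = L"
    proof -
      have "\<And>x. x \<in> L \<Longrightarrow> ?t (s x) = x" using aut_inv(2)[OF s] Lc by auto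
      hence "(\<lambda>x. ?t (s x)) ` L = (\<lambda>x. x) ` L" by (rule image_cong[OF refl])
      thus ?thesis by simp
    qed
    finally show ?thesis .
  qed
  have main: "algebraic L w \<and> (\<exists>rs. distinct rs \<and> set rs \<subseteq> s ` M \<and> length rs = degree (Irr L w) \<and>
              (\<forall>r\<in>set rs. eval (Irr L w) r = \<zero>))" if w: "w \<in> s ` M" for w
  proof -
    obtain z where z: "z \<in> M" "w = s z" using w by blast
    have zc: "z \<in> carrier R" using z(1) Mc by auto
    obtain rs where rs: "distinct rs" "set rs \<subseteq> M" "length rs = degree (Irr L z)"
        "\<forall>r\<in>set rs. eval (Irr L z) r = \<zero>" and algz: "algebraic L z" using gal[OF z(1)] by blast
    let ?p = "Irr L z"
    have alg': "(algebraic over L) z" using algz by (simp add: over_def)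
    have pL: "?p \<in> carrier (L[X])" using IrrE(1)[OF Ls zc alg'] .
    have pne: "?p \<noteq> []" using pirreducible_degree[OF Ls pL IrrE(2)[OF Ls zc alg']] by auto
    have pz: "eval ?p z = \<zero>" using IrrE(4)[OF Ls zc alg'] .
    let ?sp = "map s ?p"
    have spL: "?sp \<in> carrier (L[X])" using H.subfield_polynomial_hom[OF Ls one_not_zero pL] sL by simp
    have spne: "?sp \<noteq> []" using pne by simp
    have evs: "eval ?sp (s z) = \<zero>" using H.eval_hom[OF subfieldE(1)[OF Ls] zc pL] pz by simp
    have szc: "s z \<in> carrier R" using aut_carr[OF s zc] .
    have algw: "(algebraic over L) (s z)" using algebraicI[OF spL spne evs] .
    let ?q = "Irr L (s z)"
    have qL: "?q \<in> carrier (L[X])" using IrrE(1)[OF Ls szc algw] .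
    have qne: "?q \<noteq> []" using pirreducible_degree[OF Ls qL IrrE(2)[OF Ls szc algw]] by auto
    have qz: "eval ?q (s z) = \<zero>" using IrrE(4)[OF Ls szc algw] .
    have d1: "?q pdivides ?sp" using Irr_minimal[OF Ls szc algw spL evs] .
    have le1: "degree ?q \<le> degree ?p"
      using pdivides_imp_degree_le[OF subfieldE(1)[OF Ls] qL spL spne] d1 by simp
    let ?tq = "map ?t ?q"
    have tqL: "?tq \<in> carrier (L[X])" using Ht.subfield_polynomial_hom[OF Ls one_not_zero qL] tL by simp
    have tqne: "?tq \<noteq> []" using qne by simp
    have "?t (eval ?q (s z)) = eval ?tq (?t (s z))" using Ht.eval_hom[OF subfieldE(1)[OF Ls] szc qL] .
    hence evt: "eval ?tq z = \<zero>" using qz aut_inv(2)[OF s zc] by simp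
    have d2: "?p pdivides ?tq" using Irr_minimal[OF Ls zc alg' tqL evt] .
    have le2: "degree ?p \<le> degree ?tq"
      using pdivides_imp_degree_le[OF subfieldE(1)[OF Ls] pL tqL tqne] d2 by simp
    have deq: "degree ?q = degree ?p" using le1 le2 by simp
    have qset: "set ?q \<subseteq> carrier R"
      using qL polynomial_incl Lc unfolding sym[OF univ_poly_carrier] by blast
    have stq: "map s ?tq = ?q"
    proof -
      have "map s ?tq = map (\<lambda>c. s (?t c)) ?q" by simp
      also have "\<dots> = ?q" using qset aut_inv(3)[OF s] by (intro map_idI) auto
      finally show ?thesis .
    qed
    have pR: "?p \<in> carrier (poly_ring R)"
      using carrier_polynomial[OF subfieldE(1)[OF Ls]] pL unfolding sym[OF univ_poly_carrier] by blast
    have roots': "eval ?q (s r) = \<zero>" if r: "r \<in> set rs" for r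
    proof -
      have rc: "r \<in> carrier R" using r rs(2) Mc by auto
      have "eval ?p r = \<zero>" using rs(4) r by blast
      hence "eval ?tq r = \<zero>" using pdivides_imp_root_sharing[OF pR d2 rc] by simp
      moreover have "s (eval ?tq r) = eval (map s ?tq) (s r)" using H.eval_hom[OF subfieldE(1)[OF Ls] rc tqL] .
      ultimately show ?thesis using stq by simp
    qed
    have "distinct (map s rs)"
      using rs(1) inj_on_subset[OF injM rs(2)] by (simp add: distinct_map)
    moreover have "set (map s rs) \<subseteq> s ` M" using rs(2) by auto
    moreover have "length (map s rs) = degree ?q" using rs(3) deq by simp
    moreover have "\<forall>r'\<in>set (map s rs). eval ?q r' = \<zero>" using roots' by auto
    ultimately have "\<exists>rs. distinct rs \<and> set rs \<subseteq> s ` M \<and> length rs = degree (Irr L w) \<and>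
              (\<forall>r\<in>set rs. eval (Irr L w) r = \<zero>)" using z(2) by blast
    moreover have "algebraic L w" using algw z(2) by (simp add: over_def)
    ultimately show ?thesis by blast
  qed
  show "galois_ext R L (s ` M)" unfolding galois_ext_def using Ls sMs LsM main by blast
qed

end

context qcl begin

lemma gen_mono: "A \<subseteq> B \<Longrightarrow> B \<subseteq> carrier R \<Longrightarrow> generate_field R A \<subseteq> generate_field R B"
  using generate_field_min_subfield1[of A "generate_field R B"] generate_field_is_subfield[of B]
    generate_field.incl[of _ B R] by blast

lemma tower_stable:
  assumes L: "quadratic_ext R F L"
  shows "tower_aux R L n \<subseteq> carrier R \<and> subfield (tower_aux R L n) R \<and> L \<subseteq> tower_aux R L n \<and>
         (\<forall>s. autF R F s \<longrightarrow> s ` tower_aux R L n \<subseteq> tower_aux R L n)"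
proof (induction n)
  have Ls: "subfield L R" using L unfolding quadratic_ext_def by blast
  case 0
  show ?case using Ls subfieldE(3)[OF Ls] L_stable_eq[OF L] by simp
next
  have Ls: "subfield L R" using L unfolding quadratic_ext_def by blast
  case (Suc n)
  let ?T = "tower_aux R L n"
  let ?Ms = "{M. quadratic_ext R ?T M \<and> galois_ext R L M}"
  let ?H = "?T \<union> \<Union>?Ms"
  have Tc: "?T \<subseteq> carrier R" and Ts: "subfield ?T R" and LT: "L \<subseteq> ?T"
    and st: "\<And>s. autF R F s \<Longrightarrow> s ` ?T \<subseteq> ?T" using Suc by auto
  have Hc: "?H \<subseteq> carrier R"
  proof
    fix h assume "h \<in> ?H"
    thus "h \<in> carrier R"
    proof
      assume "h \<in> ?T" thus ?thesis using Tc by blast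
    next
      assume "h \<in> \<Union>?Ms"
      then obtain M where M: "M \<in> ?Ms" "h \<in> M" by blast
      hence "subfield M R" unfolding quadratic_ext_def by blast
      thus ?thesis using subfieldE(3) M(2) by blast
    qed
  qed
  have eq: "tower_aux R L (Suc n) = generate_field R ?H" by simp
  have s1: "generate_field R ?H \<subseteq> carrier R" using generate_field_incl[OF Hc] .
  have s2: "subfield (generate_field R ?H) R" using generate_field_is_subfield[OF Hc] .
  have s3: "L \<subseteq> generate_field R ?H" using LT generate_field.incl[of _ ?H R] by blast
  have s4: "s ` generate_field R ?H \<subseteq> generate_field R ?H" if s: "autF R F s" for s
  proof -
    have sT: "s ` ?T = ?T" using img_eq_from_sub[OF s Tc st] .
    have sL: "s ` L = L" using L_stable_eq[OF L s] .
    have "s ` ?H \<subseteq> ?H"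
    proof
      fix y assume "y \<in> s ` ?H"
      then obtain h where h: "h \<in> ?H" "y = s h" by blast
      show "y \<in> ?H"
      proof (cases "h \<in> ?T")
        case True thus ?thesis using h(2) st[OF s] by blast
      next
        case False
        then obtain M where M: "M \<in> ?Ms" "h \<in> M" using h(1) by blast
        have q: "quadratic_ext R ?T M" and g: "galois_ext R L M" using M(1) by auto
        have "s ` M \<in> ?Ms" using M_stable[OF s Ts sT Ls sL q g] by blast
        moreover have "y \<in> s ` M" using M(2) h(2) by blast
        ultimately show ?thesis by blast
      qed
    qed
    hence "generate_field R (s ` ?H) \<subseteq> generate_field R ?H" using gen_mono Hc by blast
    thus ?thesis using gen_img[OF s Hc] by blast
  qed
  show ?case unfolding eq using s1 s2 s3 s4 by blast
qed

theorem main: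
  assumes L: "quadratic_ext R F L"
  shows "galois_ext R F (tower R L 3)"
proof -
  let ?T = "tower_aux R L 2"
  have eqT: "tower R L 3 = ?T" unfolding tower_def by simp
  have Tc: "?T \<subseteq> carrier R" and Ts: "subfield ?T R" and LT: "L \<subseteq> ?T"
    and st: "\<And>s. autF R F s \<Longrightarrow> s ` ?T \<subseteq> ?T" using tower_stable[OF L, of 2] by auto
  have FL: "F \<subseteq> L" using L unfolding quadratic_ext_def by blast
  have main: "algebraic F x \<and> (\<exists>rs. distinct rs \<and> set rs \<subseteq> ?T \<and> length rs = degree (Irr F x) \<and>
              (\<forall>r\<in>set rs. eval (Irr F x) r = \<zero>))" if x: "x \<in> ?T" for x
  proof -
    have xc: "x \<in> carrier R" using x Tc by blast
    let ?O = "{s x | s. autF R F s}"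
    note orb = orbit[OF xc]
    obtain rs where rs: "set rs = ?O" "distinct rs" using finite_distinct_list[OF orb(1)] by blast
    have "length rs = card ?O" using distinct_card[OF rs(2)] rs(1) by simp
    hence len: "length rs = degree (Irr F x)" using orb(2) by simp
    have OT: "?O \<subseteq> ?T"
    proof
      fix r assume "r \<in> ?O"
      then obtain s where s: "autF R F s" "r = s x" by blast
      thus "r \<in> ?T" using st[OF s(1)] x by blast
    qed
    have "\<forall>r\<in>set rs. eval (Irr F x) r = \<zero>" using orb(3) rs(1) by blast
    hence "\<exists>rs. distinct rs \<and> set rs \<subseteq> ?T \<and> length rs = degree (Irr F x) \<and>
              (\<forall>r\<in>set rs. eval (Irr F x) r = \<zero>)" using rs OT len by blast
    moreover have "algebraic F x" using all_algebraic[OF xc] .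
    ultimately show ?thesis by blast
  qed
  show ?thesis unfolding eqT galois_ext_def using F_sub Ts FL LT main by blast
qed

end

theorem proposition1:
  fixes R :: "('a, 'b) ring_scheme" and F L :: "'a set"
  assumes "quadratic_closure R F"
    and "\<one>\<^bsub>R\<^esub> \<oplus>\<^bsub>R\<^esub> \<one>\<^bsub>R\<^esub> \<noteq> \<zero>\<^bsub>R\<^esub>"
    and "quadratic_ext R F L"
  shows "galois_ext R F (tower R L 3)"
proof -
  have fR: "field R" using assms(1) unfolding quadratic_closure_def by blast
  interpret Q: qcl R F
    by (rule qcl.intro[OF fR]) (use assms(1,2) in \<open>simp add: qcl_axioms_def\<close>)
  show ?thesis using Q.main[OF assms(3)] .
qed

end
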